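(* Let $\mathbb{D}=\{z\in\mathbb{C}:|z|<1\}$. For all $z_1,z_2\in\mathbb{D}$, \[ b_{\mathbb{D},2}(z_1,z_2)=\frac{|z_1-z_2|}{\sqrt{2+|z_1|^2+|z_2|^2-2|z_1+z_2|}}. \] In particular, for every $t\in(-1,1)$, $\lim_{r\to1,\ r\in(0,1)}b_{\mathbb{D},2}(r,t)=1$.
   Context: For $z_1,z_2\in\mathbb{D}$, $b_{\mathbb{D},2}(z_1,z_2)=\sup_{z\in\partial\mathbb{D}}\frac{|z_1-z_2|}{\sqrt{|z_1-z|^2+|z-z_2|^2}}$. *)

theory Defs
  imports "HOL-Analysis.Analysis"
begin

definition b_D2 :: "complex \<Rightarrow> complex \<Rightarrow> real" where
  "b_D2 z1 z2 = (SUP z\<in>sphere (0::complex) 1.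
      cmod (z1 - z2) / sqrt ((cmod (z1 - z))\<^sup>2 + (cmod (z - z2))\<^sup>2))"

end

theory Submission
  imports Defs
begin

lemma denom_id:
  fixes z1 z2 z :: complex
  assumes "cmod z = 1"
  shows "(cmod (z1 - z))\<^sup>2 + (cmod (z - z2))\<^sup>2
     = 2 + (cmod z1)\<^sup>2 + (cmod z2)\<^sup>2 - 2 * Re ((z1 + z2) * cnj z)"
proof -
  have "(Re z)\<^sup>2 + (Im z)\<^sup>2 = 1" using assms cmod_power2[of z] by simp
  thus ?thesis unfolding cmod_power2 by (simp add: power2_eq_square algebra_simps)
qed

lemma denom_ge:
  fixes z1 z2 z :: complex
  assumes "cmod z = 1"
  shows "(cmod (z1 - z))\<^sup>2 + (cmod (z - z2))\<^sup>2
     \<ge> 2 + (cmod z1)\<^sup>2 + (cmod z2)\<^sup>2 - 2 * cmod (z1 + z2)"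
proof -
  have "Re ((z1 + z2) * cnj z) \<le> cmod ((z1 + z2) * cnj z)" by (rule complex_Re_le_cmod)
  also have "\<dots> = cmod (z1 + z2)" using assms by (simp add: norm_mult)
  finally show ?thesis using denom_id[OF assms, of z1 z2] by linarith
qed

lemma denom_attained:
  fixes z1 z2 :: complex
  obtains z where "cmod z = 1" "(cmod (z1 - z))\<^sup>2 + (cmod (z - z2))\<^sup>2
     = 2 + (cmod z1)\<^sup>2 + (cmod z2)\<^sup>2 - 2 * cmod (z1 + z2)"
proof (cases "z1 + z2 = 0")
  case True
  show ?thesis
    apply (rule that[of 1]) using denom_id[of 1 z1 z2] True by auto
next
  case False
  define z where "z = (z1 + z2) / of_real (cmod (z1 + z2))"
  have n: "cmod z = 1" using False by (simp add: z_def norm_divide)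
  have "(z1 + z2) * cnj z = of_real (cmod (z1 + z2))"
  proof -
    have "(z1 + z2) * cnj z = ((z1 + z2) * cnj (z1 + z2)) / of_real (cmod (z1 + z2))"
      by (simp add: z_def)
    also have "\<dots> = of_real ((cmod (z1 + z2))\<^sup>2) / of_real (cmod (z1 + z2))"
      by (simp only: complex_norm_square)
    also have "\<dots> = of_real (cmod (z1 + z2))" using False
      by (simp add: power2_eq_square)
    finally show ?thesis .
  qed
  hence "Re ((z1 + z2) * cnj z) = cmod (z1 + z2)" by simp
  thus ?thesis using that[OF n] denom_id[OF n, of z1 z2] by simp
qed

lemma part1:
  fixes z1 z2 :: complex
  assumes "z1 \<in> ball 0 1" "z2 \<in> ball 0 1"
  shows "b_D2 z1 z2 = cmod (z1 - z2) /
              sqrt (2 + (cmod z1)\<^sup>2 + (cmod z2)\<^sup>2 - 2 * cmod (z1 + z2))"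
proof -
  let ?D = "2 + (cmod z1)\<^sup>2 + (cmod z2)\<^sup>2 - 2 * cmod (z1 + z2)"
  have a: "cmod z1 < 1" "cmod z2 < 1" using assms by auto
  have "cmod (z1 + z2) \<le> cmod z1 + cmod z2" by (rule norm_triangle_ineq)
  moreover have "0 < (1 - cmod z1)\<^sup>2 + (1 - cmod z2)\<^sup>2" using a by (simp add: add_pos_nonneg)
  ultimately have Dpos: "0 < ?D" by (simp add: power2_eq_square algebra_simps)
  obtain z0 where z0: "cmod z0 = 1" "(cmod (z1 - z0))\<^sup>2 + (cmod (z0 - z2))\<^sup>2 = ?D"
    by (rule denom_attained)
  show ?thesis unfolding b_D2_def
  proof (rule cSup_eq_maximum)
    show "cmod (z1 - z2) / sqrt ?D \<in> (\<lambda>z. cmod (z1 - z2) / sqrt ((cmod (z1 - z))\<^sup>2 + (cmod (z - z2))\<^sup>2)) ` sphere 0 1"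
      using z0 by (intro image_eqI[of _ _ z0]) auto
  next
    fix x assume "x \<in> (\<lambda>z. cmod (z1 - z2) / sqrt ((cmod (z1 - z))\<^sup>2 + (cmod (z - z2))\<^sup>2)) ` sphere 0 1"
    then obtain z where z: "cmod z = 1" and x: "x = cmod (z1 - z2) / sqrt ((cmod (z1 - z))\<^sup>2 + (cmod (z - z2))\<^sup>2)"
      by auto
    have "?D \<le> (cmod (z1 - z))\<^sup>2 + (cmod (z - z2))\<^sup>2" using denom_ge[OF z] by simp
    hence "sqrt ?D \<le> sqrt ((cmod (z1 - z))\<^sup>2 + (cmod (z - z2))\<^sup>2)" by (rule real_sqrt_le_mono)
    moreover have "0 < sqrt ?D" using Dpos by simp
    ultimately show "x \<le> cmod (z1 - z2) / sqrt ?D" unfolding x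
      by (intro divide_left_mono) auto
  qed
qed

lemma part2:
  fixes t :: real
  assumes "-1 < t" "t < 1"
  shows "((\<lambda>r::real. b_D2 (complex_of_real r) (complex_of_real t)) \<longlongrightarrow> 1)
              (at 1 within {0<..<1})"
proof -
  define f where "f = (\<lambda>r::real. \<bar>r - t\<bar> / sqrt (2 + r\<^sup>2 + t\<^sup>2 - 2 * \<bar>r + t\<bar>))"
  have ev: "\<forall>\<^sub>F r in at 1 within {0<..<1}. f r = b_D2 (complex_of_real r) (complex_of_real t)"
  unfolding eventually_at_filter
  proof -
    show "\<forall>\<^sub>F r in nhds 1. r \<noteq> 1 \<longrightarrow> r \<in> {0<..<1} \<longrightarrow> f r = b_D2 (complex_of_real r) (complex_of_real t)"
    proof (rule always_eventually, intro allI impI)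
      fix r :: real assume "r \<noteq> 1" "r \<in> {0<..<1}"
      hence "complex_of_real r \<in> ball 0 1" "complex_of_real t \<in> ball 0 1" using assms by auto
      from part1[OF this] show "f r = b_D2 (complex_of_real r) (complex_of_real t)"
        unfolding f_def by (simp flip: of_real_add of_real_diff del: of_real_add of_real_diff)
    qed
  qed
  have hD: "2 + 1\<^sup>2 + t\<^sup>2 - 2 * \<bar>1 + t\<bar> = (1 - t)\<^sup>2"
    using assms by (simp add: power2_eq_square algebra_simps)
  have "sqrt (2 + 1\<^sup>2 + t\<^sup>2 - 2 * \<bar>1 + t\<bar>) \<noteq> 0" unfolding hD using assms by simp
  hence "(f \<longlongrightarrow> f 1) (at 1 within {0<..<1})"
    unfolding f_def by (intro tendsto_intros)
  moreover have "f 1 = 1"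
  proof -
    have "\<bar>1 + t\<bar> = 1 + t" "\<bar>1 - t\<bar> = 1 - t" using assms by auto
    hence "2 + 1\<^sup>2 + t\<^sup>2 - 2 * \<bar>1 + t\<bar> = (1 - t)\<^sup>2" by (simp add: power2_eq_square algebra_simps)
    thus ?thesis unfolding f_def using assms by simp
  qed
  ultimately have "(f \<longlongrightarrow> 1) (at 1 within {0<..<1})" by simp
  thus ?thesis using ev by (rule tendsto_cong[THEN iffD1, rotated])
qed

theorem theorem3p15:
  shows "(\<forall>z1 \<in> ball (0::complex) 1. \<forall>z2 \<in> ball (0::complex) 1.
            b_D2 z1 z2 = cmod (z1 - z2) /
              sqrt (2 + (cmod z1)\<^sup>2 + (cmod z2)\<^sup>2 - 2 * cmod (z1 + z2)))
         \<and> (\<forall>t::real. -1 < t \<and> t < 1 \<longrightarrow>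
            ((\<lambda>r::real. b_D2 (complex_of_real r) (complex_of_real t)) \<longlongrightarrow> 1)
              (at 1 within {0<..<1}))"
  using part1 part2 by blast

end
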